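(* Let $d\ge 2$ be an integer and for $x>0$ let $$\tau_d(x)=\frac{e^{-x}x^d}{d!},\qquad \varphi_d(x)=1-\tau_d(x)-\tau_d(x)\frac{(x-d)^2}{x}.$$ Then $\inf_{x>0}\varphi_d(x)>0$. *)

theory Defs
  imports Complex_Main
begin

definition tau :: "nat \<Rightarrow> real \<Rightarrow> real" where
  "tau d x = exp (- x) * x ^ d / fact d"

definition phi :: "nat \<Rightarrow> real \<Rightarrow> real" where
  "phi d x = 1 - tau d x - tau d x * (x - real d)^2 / x"

end

theory Submission imports Defs begin

definition g :: "nat \<Rightarrow> real \<Rightarrow> real" where
  "g m x = exp (-x) * x^(Suc m) * (x + (x - real (m+2))^2)"

lemma g_deriv: "(g m has_real_derivative
   exp (-x) * x^m * (-(x - real (m+2)) * ((x - real (m+2))^2 - real (m+2)))) (at x)"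
proof -
  have "(g m has_real_derivative
     (-exp (-x)) * x^(Suc m) * (x + (x - real (m+2))^2) + exp (-x) * (real (Suc m) * x^m) * (x + (x - real (m+2))^2)
     + exp (-x) * x^(Suc m) * (1 + 2 * (x - real (m+2)))) (at x)"
    unfolding g_def
    apply (rule derivative_eq_intros refl | simp)+
    by (simp add: algebra_simps)
  moreover have "(-exp (-x)) * x^(Suc m) * (x + (x - real (m+2))^2) + exp (-x) * (real (Suc m) * x^m) * (x + (x - real (m+2))^2)
     + exp (-x) * x^(Suc m) * (1 + 2 * (x - real (m+2))) =
     exp (-x) * x^m * (-(x - real (m+2)) * ((x - real (m+2))^2 - real (m+2)))"
    by (simp add: power2_eq_square algebra_simps)
  ultimately show ?thesis by simp
qed

lemma pow_exp_bound:
  fixes y :: real assumes "y > 0" "m \<ge> 1"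
  shows "exp (-y) * y^m \<le> exp (- real m) * real m ^ m"
proof -
  have "y / m \<le> exp (y/m - 1)" using exp_ge_add_one_self[of "y/m - 1"] by simp
  hence "(y/m)^m \<le> exp (y/m - 1)^m" using assms by (intro power_mono) auto
  also have "\<dots> = exp (y - m)" using assms by (simp add: exp_of_nat_mult[symmetric] field_simps flip: exp_of_nat_mult)
  finally have "y^m / real m ^ m \<le> exp y * exp (- real m)" by (simp add: power_divide exp_diff exp_minus field_simps)
  thus ?thesis using assms by (simp add: field_simps exp_minus)
qed

lemma fact_bound: "m \<ge> 1 \<Longrightarrow> real m ^ m * exp (- real m) \<le> fact m * exp (-1)"
proof (induction m rule: dec_induct)
  case base then show ?case by simp
next
  case (step m)
  have m: "real m \<ge> 1" using step by simp
  have "(1 + 1 / real m) ^ m \<le> exp (1 / real m) ^ m"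
    by (intro power_mono) (use exp_ge_add_one_self[of "1/real m"] in auto)
  also have "\<dots> = exp 1" using m by (simp flip: exp_of_nat_mult)
  finally have "((real m + 1) / real m) ^ m \<le> exp 1" using m by (simp add: field_simps)
  hence A: "(real m + 1) ^ m \<le> exp 1 * real m ^ m" using m by (simp add: power_divide field_simps)
  have "real (Suc m) ^ Suc m * exp (- real (Suc m)) = (real m + 1) * ((real m + 1)^m * exp (- real m) * exp (-1))"
    by (simp add: exp_diff exp_minus field_simps)
  also have "\<dots> \<le> (real m + 1) * ((exp 1 * real m ^ m) * exp (- real m) * exp (-1))"
    using A by (intro mult_left_mono mult_right_mono) auto
  also have "\<dots> = (real m + 1) * (real m ^ m * exp (- real m))"
    by (simp add: exp_minus field_simps)
  also have "\<dots> \<le> (real m + 1) * (fact m * exp (-1))"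
    using step.IH by (intro mult_left_mono) auto
  also have "\<dots> = fact (Suc m) * exp (-1)" by simp
  finally show ?case .
qed

lemma tau_bound:
  fixes y :: real assumes "y > 0" "m \<ge> 1"
  shows "exp (-y) * y^m \<le> fact m * exp (-1)"
  using pow_exp_bound[OF assms] fact_bound[OF assms(2)] by (simp add: mult.commute)

lemma g_bound:
  assumes d: "d \<ge> 2" and x: "x > 0"
  shows "g (d-2) x \<le> 2 * exp (-1) * fact d"
proof -
  define m where "m = d - 2"
  define D where "D = real d"
  define s where "s = sqrt D"
  define a where "a = D - s"
  define b where "b = D + s"
  have md: "m + 2 = d" "real (m+2) = D" using d by (auto simp: m_def D_def)
  have D2: "D \<ge> 2" using d by (simp add: D_def)
  have ss: "s * s = D" using D2 by (simp add: s_def)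
  have s0: "s > 0" using D2 by (simp add: s_def)
  have sD: "s < D"
  proof -
    have "1 < s" unfolding s_def using D2 by simp
    hence "s * 1 < s * s" using s0 by (intro mult_strict_left_mono) auto
    thus ?thesis using ss by simp
  qed
  have a0: "a > 0" using sD by (simp add: a_def)
  have der: "\<And>t. (g m has_real_derivative exp (-t) * t^m * ((D - t) * ((t - a) * (t - b)))) (at t)"
  proof -
    fix t
    have E: "exp (-t) * t^m * (-(t - D) * ((t - D)^2 - D)) = exp (-t) * t^m * ((D - t) * ((t - a) * (t - b)))"
      using ss by (simp add: a_def b_def power2_eq_square algebra_simps)
    moreover have "(g m has_real_derivative exp (-t) * t^m * (-(t - D) * ((t - D)^2 - D))) (at t)"
      using g_deriv[of m t] unfolding md(2) .
    thus "(g m has_real_derivative exp (-t) * t^m * ((D - t) * ((t - a) * (t - b)))) (at t)"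
      unfolding E .
  qed
  have ga: "g m a \<le> 2 * exp (-1) * fact d"
  proof -
    have "(a - D)^2 = D" using ss by (simp add: a_def power2_eq_square)
    hence "g m a = exp (-a) * a^Suc m * (a + D)" unfolding g_def md(2) by simp
    also have "\<dots> \<le> exp (-a) * a^Suc m * (2 * D)" using sD s0 by (intro mult_left_mono) (auto simp: a_def)
    also have "\<dots> \<le> fact (Suc m) * exp (-1) * (2 * D)"
      using tau_bound[OF a0, of "Suc m"] D2 by (intro mult_right_mono) auto
    also have "\<dots> = 2 * exp (-1) * fact d"
    proof -
      have "fact (m+2) = (real (m+2) * fact (Suc m) :: real)"
        using fact_Suc[of "Suc m", where 'a=real] by (simp add: numeral_2_eq_2)
      hence "fact d = D * (fact (Suc m) :: real)" unfolding md(2) md(1) by (simp add: D_def)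
      thus ?thesis by simp
    qed
    finally show ?thesis .
  qed
  have b0: "b > 0" using s0 D2 by (simp add: b_def)
  have gb: "g m b \<le> 2 * exp (-1) * fact d"
  proof -
    have "(b - D)^2 = D" using ss by (simp add: b_def power2_eq_square)
    hence "g m b = exp (-b) * b^Suc m * (b + D)" unfolding g_def md(2) by simp
    also have "\<dots> \<le> exp (-b) * b^Suc m * (2 * b)" using s0 b0 by (intro mult_left_mono) (auto simp: b_def)
    also have "\<dots> = 2 * (exp (-b) * b^d)" using md by (simp add: field_simps flip: md(1))
    also have "\<dots> \<le> 2 * (fact d * exp (-1))"
      using tau_bound[OF b0, of d] d by simp
    finally show ?thesis by (simp add: mult_ac)
  qed
  have "g m x \<le> 2 * exp (-1) * fact d"
  proof (cases "x \<le> a")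
    case True
    have "g m x \<le> g m a"
    proof (rule deriv_nonneg_imp_mono[OF der])
      fix t assume t: "t \<in> {x..a}"
      hence "0 \<le> (D - t) * ((t - a) * (t - b))" using x sD s0
        by (intro mult_nonneg_nonneg mult_nonpos_nonpos) (auto simp: a_def b_def)
      thus "0 \<le> exp (-t) * t^m * ((D - t) * ((t - a) * (t - b)))" using t x by simp
    qed (use True in auto)
    thus ?thesis using ga by simp
  next
    case xa: False
    show ?thesis
    proof (cases "x \<le> D")
      case True
      have "g m x \<le> g m a"
      proof (rule deriv_nonpos_imp_antimono[OF der])
        fix t assume t: "t \<in> {a..x}"
        hence "(D - t) * ((t - a) * (t - b)) \<le> 0" using True sD s0
          by (intro mult_nonneg_nonpos mult_nonneg_nonpos) (auto simp: a_def b_def)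
        thus "exp (-t) * t^m * ((D - t) * ((t - a) * (t - b))) \<le> 0" using t a0
          by (simp add: mult_nonneg_nonpos)
      qed (use xa in auto)
      thus ?thesis using ga by simp
    next
      case xD: False
      show ?thesis
      proof (cases "x \<le> b")
        case True
        have "g m x \<le> g m b"
        proof (rule deriv_nonneg_imp_mono[OF der])
          fix t assume t: "t \<in> {x..b}"
          hence "0 \<le> (t - D) * ((t - a) * (b - t))" using xD sD s0
            by (intro mult_nonneg_nonneg) (auto simp: a_def b_def)
          hence "0 \<le> (D - t) * ((t - a) * (t - b))" by (simp add: algebra_simps)
          thus "0 \<le> exp (-t) * t^m * ((D - t) * ((t - a) * (t - b)))" using t x by simp
        qed (use True in auto)
        thus ?thesis using gb by simp
      next
        case False
        have "g m x \<le> g m b"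
        proof (rule deriv_nonpos_imp_antimono[OF der])
          fix t assume t: "t \<in> {b..x}"
          hence "0 \<le> (t - D) * ((t - a) * (t - b))" using sD s0
            by (intro mult_nonneg_nonneg) (auto simp: a_def b_def)
          hence "(D - t) * ((t - a) * (t - b)) \<le> 0" by (simp add: algebra_simps)
          thus "exp (-t) * t^m * ((D - t) * ((t - a) * (t - b))) \<le> 0" using t b0
            by (simp add: mult_nonneg_nonpos)
        qed (use False in auto)
        thus ?thesis using gb by simp
      qed
    qed
  qed
  thus ?thesis by (simp add: m_def)
qed

lemma phi_eq:
  assumes d: "d \<ge> 2" and x: "x > 0"
  shows "phi d x = 1 - g (d-2) x / fact d"
proof -
  have "Suc (d - 2) = d - 1" using d by simp
  moreover have "x ^ d = x * x^(d-1)" using d by (metis Suc_diff_1 le_less_trans order_less_le pos2 power_Suc zero_less_iff_neq_zero)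
  ultimately show ?thesis using x d
    by (simp add: phi_def tau_def g_def field_simps)
qed

theorem lemma3p1:
  fixes d :: nat
  assumes "d \<ge> 2"
  shows "(INF x\<in>{0<..}. phi d x) > 0"
proof -
  have "1 - 2 * exp (-1) \<le> (INF x\<in>{0<..}. phi d x)"
  proof (rule cINF_greatest)
    show "{0<..} \<noteq> ({} :: real set)" by auto
  next
    fix x :: real assume "x \<in> {0<..}"
    hence x: "x > 0" by simp
    have "g (d-2) x / fact d \<le> 2 * exp (-1)"
      using g_bound[OF assms x] by (simp add: divide_le_eq)
    thus "1 - 2 * exp (-1) \<le> phi d x" using phi_eq[OF assms x] by simp
  qed
  moreover have "2 * exp (-1::real) < 1"
  proof -
    have h: "3/2 \<le> exp (1/2::real)" using exp_ge_add_one_self[of "1/2::real"] by simp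
    have "exp (1::real) = exp (1/2) * exp (1/2)" by (simp flip: exp_add)
    also have "\<dots> \<ge> 3/2 * (3/2)" using h by (intro mult_mono) auto
    finally have "(2::real) < exp 1" by simp
    thus ?thesis by (simp add: exp_minus field_simps)
  qed
  ultimately show ?thesis by linarith
qed

end
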